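(* For every single-item auction setting with $n$ bidders, binary signals and interdependent SOS valuations, there exists an ex post IC-IR randomized mechanism that achieves a $2$-approximation to the optimal welfare; that is, there is an ex post IC-IR mechanism $M=(x,p)$ such that for every signal profile $s\in\{0,1\}^n$, $$\sum_{i=1}^n x_i(s)\,v_i(s)\;\ge\;\tfrac12\max_{i\in[n]} v_i(s).$$
   Context: Single-item auction with bidders $[n]$. Each bidder $i$ has a private binary signal $s_i\in\{0,1\}$; a signal profile $s=(s_1,\dots,s_n)$ is identified with the set $S=\{i: s_i=1\}\subseteq[n]$. Each bidder $i$ has a publicly known valuation $v_i:2^{[n]}\to\mathbb{R}_{\ge0}$ (its value for the item given the set of high signals), which is weakly increasing (monotone: $S\subseteq T\Rightarrow v_i(S)\le v_i(T)$) and strictly increasing in its own signal ($v_i(S\cup\{i\})>v_i(S)$ for $i\notin S$). Valuations are SOS (submodular over signals) if each $v_i$ is a submodular set function: for all $S\subseteq T\subseteq[n]$ and $\ell\in[n]\setminus T$, $v_i(S\cup\{\ell\})-v_i(S)\ge v_i(T\cup\{\ell\})-v_i(T)$. A randomized mechanism $M=(x,p)$ maps each reported signal profile $s$ to allocation probabilities $x(s)=(x_1(s),\dots,x_n(s))$ with $x_i(s)\ge0$ and $\sum_i x_i(s)\le1$ (feasibility), and expected payments $p(s)=(p_1(s),\dots,p_n(s))$. $M$ is ex post IC-IR if for every bidder $i$, every true profile $s$ and every report $s_i'$, the quantity $x_i(s_{-i},s_i')v_i(s)-p_i(s_{-i},s_i')$ is nonnegative when $s_i'=s_i$ and is maximized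 over $s_i'$ at $s_i'=s_i$. *)

theory Defs
  imports "HOL-Analysis.Analysis"
begin

text \<open>Bidders are 0..<n. A signal profile is identified with the set S of bidders
 with high signal, S \<subseteq> {..<n}. Valuations v i S, allocations x S i, payments p S i.\<close>

definition monotone_val :: "nat \<Rightarrow> (nat set \<Rightarrow> real) \<Rightarrow> bool" where
  "monotone_val n f \<longleftrightarrow> (\<forall>S T. S \<subseteq> T \<longrightarrow> T \<subseteq> {..<n} \<longrightarrow> f S \<le> f T)"

definition submodular_val :: "nat \<Rightarrow> (nat set \<Rightarrow> real) \<Rightarrow> bool" where
  "submodular_val n f \<longleftrightarrow> (\<forall>S T l. S \<subseteq> T \<longrightarrow> T \<subseteq> {..<n} \<longrightarrow> l < n \<longrightarrow> l \<notin> T \<longrightarrow>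
      f (insert l S) - f S \<ge> f (insert l T) - f T)"

definition valid_SOS :: "nat \<Rightarrow> (nat \<Rightarrow> nat set \<Rightarrow> real) \<Rightarrow> bool" where
  "valid_SOS n v \<longleftrightarrow> (\<forall>i<n.
      (\<forall>S. S \<subseteq> {..<n} \<longrightarrow> v i S \<ge> 0)
    \<and> monotone_val n (v i)
    \<and> (\<forall>S. S \<subseteq> {..<n} \<longrightarrow> i \<notin> S \<longrightarrow> v i (insert i S) > v i S)
    \<and> submodular_val n (v i))"

definition set_report :: "nat set \<Rightarrow> nat \<Rightarrow> bool \<Rightarrow> nat set" where
  "set_report S i b = (if b then insert i S else S - {i})"

definition feasible :: "nat \<Rightarrow> (nat set \<Rightarrow> nat \<Rightarrow> real) \<Rightarrow> bool" where
  "feasible n x \<longleftrightarrow> (\<forall>S. S \<subseteq> {..<n} \<longrightarrow>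
      (\<forall>i<n. x S i \<ge> 0) \<and> (\<Sum>i<n. x S i) \<le> 1)"

definition expost_IC_IR :: "nat \<Rightarrow> (nat \<Rightarrow> nat set \<Rightarrow> real) \<Rightarrow>
    (nat set \<Rightarrow> nat \<Rightarrow> real) \<Rightarrow> (nat set \<Rightarrow> nat \<Rightarrow> real) \<Rightarrow> bool" where
  "expost_IC_IR n v x p \<longleftrightarrow> (\<forall>i<n. \<forall>S. S \<subseteq> {..<n} \<longrightarrow>
      x S i * v i S - p S i \<ge> 0
    \<and> (\<forall>b. x (set_report S i b) i * v i S - p (set_report S i b) i \<le> x S i * v i S - p S i))"

end

theory Submission
  imports Defs
begin

lemma ex_argmax:
  fixes f :: "nat \<Rightarrow> real"
  assumes "finite A" "A \<noteq> {}"
  shows "\<exists>i\<in>A. \<forall>j\<in>A. f j \<le> f i"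
proof -
  have "Max (f ` A) \<in> f ` A" using assms by simp
  then obtain i where i: "i \<in> A" "f i = Max (f ` A)" by auto
  have "\<forall>j\<in>A. f j \<le> f i" using assms i by simp
  then show ?thesis using i by blast
qed

context
  fixes n :: nat and v :: "nat \<Rightarrow> nat set \<Rightarrow> real"
  assumes sos: "valid_SOS n v"
begin

lemma vnn: "i < n \<Longrightarrow> S \<subseteq> {..<n} \<Longrightarrow> 0 \<le> v i S"
  using sos by (simp add: valid_SOS_def)

lemma vmono: "i < n \<Longrightarrow> S \<subseteq> U \<Longrightarrow> U \<subseteq> {..<n} \<Longrightarrow> v i S \<le> v i U"
  using sos unfolding valid_SOS_def monotone_val_def by blast

lemma vsub: "i < n \<Longrightarrow> S \<subseteq> U \<Longrightarrow> U \<subseteq> {..<n} \<Longrightarrow> l < n \<Longrightarrow> l \<notin> U \<Longrightarrow>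
   v i (insert l U) - v i U \<le> v i (insert l S) - v i S"
  using sos unfolding valid_SOS_def submodular_val_def by blast

definition lm :: "nat set \<Rightarrow> nat" where
  "lm T = (SOME i. i < n \<and> i \<notin> T \<and> (\<forall>j<n. j \<notin> T \<longrightarrow> v j T \<le> v i T))"

definition hm :: "nat set \<Rightarrow> nat" where
  "hm T = (SOME i. i \<in> T \<and> (\<forall>j\<in>T. v j T \<le> v i T))"

definition HH :: "nat set \<Rightarrow> real" where
  "HH T = (if T = {} then 0 else v (hm T) T)"

definition dec :: "nat set \<Rightarrow> nat set \<Rightarrow> bool" where
  "dec T R \<longleftrightarrow> (\<exists>i<n. i \<notin> T) \<and> card R \<le> 1 \<and>
     (2 - real (card R)) * HH T + (\<Sum>i\<in>R. v i T) < v (lm T) T"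

primrec Gk :: "nat \<Rightarrow> nat set \<Rightarrow> bool" where
  "Gk 0 T = dec T {}"
| "Gk (Suc k) T = dec T {i\<in>T. Gk k (T - {i}) \<and> lm (T - {i}) = i}"

definition G :: "nat set \<Rightarrow> bool" where "G T = Gk (card T) T"

definition RR :: "nat set \<Rightarrow> nat set" where
  "RR T = {i\<in>T. G (T - {i}) \<and> lm (T - {i}) = i}"

definition ee :: "nat set \<Rightarrow> real" where
  "ee T = 1 - real (card (RR T)) / 2 - (if G T then 1/2 else 0)"

definition xa :: "nat set \<Rightarrow> nat \<Rightarrow> real" where
  "xa T i = (if G T \<and> i = lm T \<and> i \<notin> T then 1/2 else 0) + (if i \<in> RR T then 1/2 else 0)
     + (if T \<noteq> {} \<and> i = hm T then ee T else 0)"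

lemma lm_spec:
  assumes "\<exists>i<n. i \<notin> T"
  shows "lm T < n \<and> lm T \<notin> T \<and> (\<forall>j<n. j \<notin> T \<longrightarrow> v j T \<le> v (lm T) T)"
proof -
  have "finite {i. i < n \<and> i \<notin> T}" "{i. i < n \<and> i \<notin> T} \<noteq> {}" using assms by auto
  from ex_argmax[OF this, of "\<lambda>j. v j T"]
  have "\<exists>i. i < n \<and> i \<notin> T \<and> (\<forall>j<n. j \<notin> T \<longrightarrow> v j T \<le> v i T)" by auto
  then show ?thesis unfolding lm_def by (rule someI_ex)
qed

lemma hm_spec:
  assumes "finite T" "T \<noteq> {}"
  shows "hm T \<in> T \<and> (\<forall>j\<in>T. v j T \<le> v (hm T) T)"
proof -
  from ex_argmax[OF assms, of "\<lambda>j. v j T"]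
  have "\<exists>i. i \<in> T \<and> (\<forall>j\<in>T. v j T \<le> v i T)" by auto
  then show ?thesis unfolding hm_def by (rule someI_ex)
qed

lemma HH_ge: "T \<subseteq> {..<n} \<Longrightarrow> k \<in> T \<Longrightarrow> v k T \<le> HH T"
  using hm_spec[of T] finite_subset[of T "{..<n}"] unfolding HH_def by auto

lemma HH_nn: "T \<subseteq> {..<n} \<Longrightarrow> 0 \<le> HH T"
  using hm_spec[of T] finite_subset[of T "{..<n}"] vnn unfolding HH_def by auto

lemma G_eq: assumes "finite T" shows "G T = dec T (RR T)"
proof (cases "card T")
  case 0
  then have "T = {}" using assms by simp
  then show ?thesis unfolding G_def RR_def by simp
next
  case (Suc k)
  have "{i\<in>T. Gk k (T - {i}) \<and> lm (T - {i}) = i} = RR T"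
    unfolding RR_def G_def using Suc assms by (auto simp: card_Diff_singleton)
  then show ?thesis unfolding G_def using Suc by simp
qed

lemma RR_sub: "RR T \<subseteq> T" unfolding RR_def by auto

lemma RR_info:
  assumes T: "T \<subseteq> {..<n}" and x: "x \<in> RR T"
  shows "x \<in> T" "x < n" "\<forall>i<n. i \<notin> T - {x} \<longrightarrow> v i (T - {x}) \<le> v x (T - {x})"
    "\<forall>k\<in>T - {x}. v k (T - {x}) < v x (T - {x})"
    "(\<forall>k\<in>T - {x}. 2 * v k (T - {x}) < v x (T - {x})) \<or>
     (\<exists>j\<in>T - {x}. (\<forall>k\<in>T - {x}. v k (T - {x}) + v j (T - {x}) < v x (T - {x}))
        \<and> v x (T - {x} - {j}) \<le> v j (T - {x} - {j}))"
proof -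
  define Tx where "Tx = T - {x}"
  have xT: "x \<in> T" and G1: "G Tx" and lmx: "lm Tx = x" using x unfolding RR_def Tx_def by auto
  have TxS: "Tx \<subseteq> {..<n}" using T unfolding Tx_def by auto
  have finTx: "finite Tx" using TxS finite_subset by blast
  have d: "dec Tx (RR Tx)" using G1 G_eq[OF finTx] by simp
  then have low: "\<exists>i<n. i \<notin> Tx" and c1: "card (RR Tx) \<le> 1"
    and ineq: "(2 - real (card (RR Tx))) * HH Tx + (\<Sum>i\<in>RR Tx. v i Tx) < v x Tx"
    unfolding dec_def lmx by auto
  have ls: "x < n \<and> x \<notin> Tx \<and> (\<forall>j<n. j \<notin> Tx \<longrightarrow> v j Tx \<le> v x Tx)"
    using lm_spec[OF low] lmx by simp
  have finR: "finite (RR Tx)" using finTx RR_sub finite_subset by blast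
  have hk: "\<forall>k\<in>Tx. v k Tx \<le> HH Tx" using HH_ge[OF TxS] by blast
  have nnk: "\<forall>k\<in>Tx. 0 \<le> v k Tx" using vnn TxS by blast
  have disj: "(\<forall>k\<in>Tx. 2 * v k Tx < v x Tx) \<or>
     (\<exists>j\<in>Tx. (\<forall>k\<in>Tx. v k Tx + v j Tx < v x Tx) \<and> v x (Tx - {j}) \<le> v j (Tx - {j}))"
  proof (cases "card (RR Tx) = 0")
    case True
    then have "RR Tx = {}" using finR by simp
    then have "2 * HH Tx < v x Tx" using ineq by simp
    then show ?thesis using hk by force
  next
    case False
    then have "card (RR Tx) = 1" using c1 by simp
    then obtain j where j: "RR Tx = {j}" by (rule card_1_singletonE)
    then have ineq2: "HH Tx + v j Tx < v x Tx" using ineq by simp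
    have jT: "j \<in> Tx" and G2: "G (Tx - {j})" and lmj: "lm (Tx - {j}) = j"
      using j unfolding RR_def by auto
    have finTj: "finite (Tx - {j})" using finTx by simp
    have "\<exists>i<n. i \<notin> Tx - {j}" using G2 G_eq[OF finTj] unfolding dec_def by simp
    from lm_spec[OF this] lmj ls have "v x (Tx - {j}) \<le> v j (Tx - {j})" by auto
    moreover have "\<forall>k\<in>Tx. v k Tx + v j Tx < v x Tx" using ineq2 hk by force
    ultimately show ?thesis using jT by blast
  qed
  have "\<forall>k\<in>Tx. v k Tx < v x Tx"
  proof
    fix k assume k: "k \<in> Tx"
    from disj show "v k Tx < v x Tx"
    proof
      assume "\<forall>k\<in>Tx. 2 * v k Tx < v x Tx" then show ?thesis using k nnk by force
    next
      assume "\<exists>j\<in>Tx. (\<forall>k\<in>Tx. v k Tx + v j Tx < v x Tx) \<and> v x (Tx - {j}) \<le> v j (Tx - {j})"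
      then obtain j where "j \<in> Tx" "\<forall>k\<in>Tx. v k Tx + v j Tx < v x Tx" by blast
      then show ?thesis using k nnk by force
    qed
  qed
  then show "x \<in> T" "x < n" "\<forall>i<n. i \<notin> T - {x} \<longrightarrow> v i (T - {x}) \<le> v x (T - {x})"
    "\<forall>k\<in>T - {x}. v k (T - {x}) < v x (T - {x})"
    "(\<forall>k\<in>T - {x}. 2 * v k (T - {x}) < v x (T - {x})) \<or>
     (\<exists>j\<in>T - {x}. (\<forall>k\<in>T - {x}. v k (T - {x}) + v j (T - {x}) < v x (T - {x}))
        \<and> v x (T - {x} - {j}) \<le> v j (T - {x} - {j}))"
    using xT ls disj unfolding Tx_def by auto
qed

lemma sw:
  assumes T: "T \<subseteq> {..<n}" and x: "x \<in> RR T" and yz: "y \<in> T" "z \<in> T" "x \<noteq> y" "x \<noteq> z" "y \<noteq> z"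
  shows "v y (T - {x}) + v z (T - {x}) < v x (T - {x}) \<or>
    (v y (T - {x}) < v x (T - {x,y}) \<and> v z (T - {x}) < v x (T - {x,z}) \<and>
     v y (T - {x}) < v x (T - {x,y,z}) \<and> v z (T - {x}) < v x (T - {x,y,z}))"
proof -
  define Tx where "Tx = T - {x}"
  have TxS: "Tx \<subseteq> {..<n}" using T unfolding Tx_def by auto
  have xn: "x < n" using RR_info[OF T x] by simp
  have yTx: "y \<in> Tx" "z \<in> Tx" using yz unfolding Tx_def by auto
  from RR_info(5)[OF T x, folded Tx_def]
  show ?thesis
  proof
    assume "\<forall>k\<in>Tx. 2 * v k Tx < v x Tx"
    then have "2 * v y Tx < v x Tx" "2 * v z Tx < v x Tx" using yTx by auto
    then show ?thesis unfolding Tx_def by simp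
  next
    assume "\<exists>j\<in>Tx. (\<forall>k\<in>Tx. v k Tx + v j Tx < v x Tx) \<and> v x (Tx - {j}) \<le> v j (Tx - {j})"
    then obtain j where jT: "j \<in> Tx" and j1: "\<forall>k\<in>Tx. v k Tx + v j Tx < v x Tx"
      and j2: "v x (Tx - {j}) \<le> v j (Tx - {j})" by blast
    show ?thesis
    proof (cases "j = y \<or> j = z")
      case True
      then show ?thesis using j1 yTx unfolding Tx_def by (auto simp: add.commute)
    next
      case False
      have jn: "j < n" using jT TxS by auto
      have "v j (Tx - {j}) \<le> v j Tx" using vmono[OF jn _ TxS] by auto
      then have big: "\<forall>k\<in>Tx. v k Tx < v x Tx - v x (Tx - {j})" using j1 j2 by force
      have key: "\<forall>k\<in>Tx. v k Tx < v x (insert j A)" if A: "A \<subseteq> Tx - {j}" for A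
      proof -
        have ins: "insert j (Tx - {j}) = Tx" using jT by auto
        have "v x (insert j (Tx - {j})) - v x (Tx - {j}) \<le> v x (insert j A) - v x A"
          by (rule vsub[OF xn A]) (use TxS jn in auto)
        moreover have "0 \<le> v x A" using vnn[OF xn] A TxS by auto
        ultimately show ?thesis using big ins by force
      qed
      have e1: "insert j (T - {x,y} - {j}) = T - {x,y}" "insert j (T - {x,z} - {j}) = T - {x,z}"
        "insert j (T - {x,y,z} - {j}) = T - {x,y,z}" using jT False unfolding Tx_def by auto
      have s1: "T - {x,y} - {j} \<subseteq> Tx - {j}" "T - {x,z} - {j} \<subseteq> Tx - {j}"
        "T - {x,y,z} - {j} \<subseteq> Tx - {j}" unfolding Tx_def by auto
      show ?thesis using key[OF s1(1)] key[OF s1(2)] key[OF s1(3)] yTx e1 unfolding Tx_def by auto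
    qed
  qed
qed

lemma Pb:
  assumes T: "T \<subseteq> {..<n}" and xyz: "x \<in> T" "y \<in> T" "z \<in> T" "x \<noteq> y" "x \<noteq> z" "y \<noteq> z"
  shows "v x (T - {x}) \<le> v x (T - {x,y}) + v x (T - {x,z}) - v x (T - {x,y,z})"
proof -
  have xn: "x < n" "y < n" using xyz T by auto
  have "v x (insert y (T - {x,y})) - v x (T - {x,y}) \<le> v x (insert y (T - {x,y,z})) - v x (T - {x,y,z})"
    by (rule vsub) (use xn T in auto)
  moreover have "insert y (T - {x,y}) = T - {x}" "insert y (T - {x,y,z}) = T - {x,z}" using xyz by auto
  ultimately show ?thesis by simp
qed

lemma Mb:
  assumes T: "T \<subseteq> {..<n}" and "p \<in> T"
  shows "v p (T - {p,q}) \<le> v p (T - {q})"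
  using assms by (intro vmono) auto

lemma no_triple:
  assumes T: "T \<subseteq> {..<n}" and abc: "a \<in> RR T" "b \<in> RR T" "c \<in> RR T" "a \<noteq> b" "a \<noteq> c" "b \<noteq> c"
  shows False
proof -
  have inT: "a \<in> T" "b \<in> T" "c \<in> T" using abc RR_sub by auto
  have lt: "a < n" "b < n" "c < n" using inT T by auto
  have eqs: "T - {b,a} = T - {a,b}" "T - {c,a} = T - {a,c}" "T - {c,b} = T - {b,c}"
     "T - {b,a,c} = T - {a,b,c}" "T - {c,a,b} = T - {a,b,c}" by auto
  note S1 = sw[OF T abc(1) inT(2) inT(3) abc(4) abc(5) abc(6)]
  note S2 = sw[OF T abc(2) inT(1) inT(3) abc(4)[symmetric] abc(6) abc(5)]
  note S3 = sw[OF T abc(3) inT(1) inT(2) abc(5)[symmetric] abc(6)[symmetric] abc(4)]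

  have S: "v b (T - {a}) + v c (T - {a}) < v a (T - {a}) \<or>
    (v b (T - {a}) < v a (T - {a,b}) \<and> v c (T - {a}) < v a (T - {a,c}) \<and>
     v b (T - {a}) < v a (T - {a,b,c}) \<and> v c (T - {a}) < v a (T - {a,b,c}))"
   "v a (T - {b}) + v c (T - {b}) < v b (T - {b}) \<or>
    (v a (T - {b}) < v b (T - {a,b}) \<and> v c (T - {b}) < v b (T - {b,c}) \<and>
     v a (T - {b}) < v b (T - {a,b,c}) \<and> v c (T - {b}) < v b (T - {a,b,c}))"
   "v a (T - {c}) + v b (T - {c}) < v c (T - {c}) \<or>
    (v a (T - {c}) < v c (T - {a,c}) \<and> v b (T - {c}) < v c (T - {b,c}) \<and>
     v a (T - {c}) < v c (T - {a,b,c}) \<and> v b (T - {c}) < v c (T - {a,b,c}))"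
    using S1 S2 S3 by (simp_all only: eqs)
  have F: "v b (T - {a}) < v a (T - {a})" "v c (T - {a}) < v a (T - {a})"
    "v a (T - {b}) < v b (T - {b})" "v c (T - {b}) < v b (T - {b})"
    "v a (T - {c}) < v c (T - {c})" "v b (T - {c}) < v c (T - {c})"
    using RR_info(4)[OF T abc(1)] RR_info(4)[OF T abc(2)] RR_info(4)[OF T abc(3)] inT abc by auto
  have P: "v a (T - {a}) \<le> v a (T - {a,b}) + v a (T - {a,c}) - v a (T - {a,b,c})"
    "v b (T - {b}) \<le> v b (T - {a,b}) + v b (T - {b,c}) - v b (T - {a,b,c})"
    "v c (T - {c}) \<le> v c (T - {a,c}) + v c (T - {b,c}) - v c (T - {a,b,c})"
    using Pb[OF T inT(1) inT(2) inT(3) abc(4) abc(5) abc(6)]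
      Pb[OF T inT(2) inT(1) inT(3) abc(4)[symmetric] abc(6) abc(5)]
      Pb[OF T inT(3) inT(1) inT(2) abc(5)[symmetric] abc(6)[symmetric] abc(4)]
    by (simp_all only: eqs)
  have M: "v a (T - {a,b}) \<le> v a (T - {b})" "v a (T - {a,c}) \<le> v a (T - {c})"
    "v b (T - {a,b}) \<le> v b (T - {a})" "v b (T - {b,c}) \<le> v b (T - {c})"
    "v c (T - {a,c}) \<le> v c (T - {a})" "v c (T - {b,c}) \<le> v c (T - {b})"
    using Mb[OF T inT(1), of b] Mb[OF T inT(1), of c] Mb[OF T inT(2), of a] Mb[OF T inT(2), of c]
      Mb[OF T inT(3), of a] Mb[OF T inT(3), of b] by (simp_all only: eqs)
  have sub: "T - {a,b,c} \<subseteq> {..<n}" using T by auto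
  have N: "0 \<le> v a (T - {a,b,c})" "0 \<le> v b (T - {a,b,c})" "0 \<le> v c (T - {a,b,c})"
    using vnn[OF lt(1) sub] vnn[OF lt(2) sub] vnn[OF lt(3) sub] by auto
  show False
    apply (insert S F P M N)
    apply (elim disjE conjE)
    apply linarith+
    done
qed

lemma card_RR: assumes T: "T \<subseteq> {..<n}" shows "card (RR T) \<le> 2"
proof (rule ccontr)
  assume "\<not> card (RR T) \<le> 2"
  then have c: "card (RR T) > 2" by simp
  have fin: "finite (RR T)" using T RR_sub finite_subset by (metis finite_lessThan)
  have "RR T \<noteq> {}" using c by (metis card.empty not_less_zero)
  then obtain a where a: "a \<in> RR T" by blast
  have c2: "card (RR T - {a}) > 1" using c a fin by (simp add: card_Diff_singleton)
  have "RR T - {a} \<noteq> {}" using c2 by (metis card.empty not_less_zero)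
  then obtain b where b: "b \<in> RR T - {a}" by blast
  have c3: "card (RR T - {a} - {b}) > 0" using c2 b fin by (simp add: card_Diff_singleton)
  have "RR T - {a} - {b} \<noteq> {}" using c3 by (metis card.empty less_irrefl)
  then obtain c where cc: "c \<in> RR T - {a} - {b}" by blast
  show False using no_triple[OF T, of a b c] a b cc by auto
qed

lemma G_card: assumes T: "T \<subseteq> {..<n}" and "G T" shows "card (RR T) \<le> 1"
  using assms G_eq[of T] finite_subset[OF T] unfolding dec_def by auto

lemma ee_nn: assumes T: "T \<subseteq> {..<n}" shows "0 \<le> ee T"
proof -
  have c: "real (card (RR T)) \<le> 2" using card_RR[OF T] by simp
  have c1: "G T \<Longrightarrow> real (card (RR T)) \<le> 1" using G_card[OF T] by simp
  show ?thesis unfolding ee_def using c c1 by (cases "G T") simp_all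
qed

lemma xa_nn: assumes T: "T \<subseteq> {..<n}" shows "0 \<le> xa T i"
proof -
  have "0 \<le> (if G T \<and> i = lm T \<and> i \<notin> T then 1/2 else (0::real))" by simp
  moreover have "0 \<le> (if i \<in> RR T then 1/2 else (0::real))" by simp
  moreover have "0 \<le> (if T \<noteq> {} \<and> i = hm T then ee T else 0)" using ee_nn[OF T] by simp
  ultimately show ?thesis unfolding xa_def by linarith
qed

lemma hm_notin: "T \<subseteq> {..<n} \<Longrightarrow> T \<noteq> {} \<Longrightarrow> hm T \<in> T"
  using hm_spec finite_subset by blast

lemma xa_mono: assumes T: "T \<subseteq> {..<n}" and i: "i \<in> T" shows "xa (T - {i}) i \<le> xa T i"
proof -
  have T': "T - {i} \<subseteq> {..<n}" using T by auto
  have h: "\<not> (T - {i} \<noteq> {} \<and> i = hm (T - {i}))" using hm_notin[OF T'] by (metis DiffD2 singletonI)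
  have h1: "(if T - {i} \<noteq> {} \<and> i = hm (T - {i}) then ee (T - {i}) else 0) = 0"
    by (rule if_not_P[OF h])
  have h2: "(if i \<in> RR (T - {i}) then 1/2 else (0::real)) = 0"
    using RR_sub[of "T - {i}"] by auto
  have h3: "(if G (T - {i}) \<and> i = lm (T - {i}) \<and> i \<notin> T - {i} then 1/2 else (0::real))
     = (if G (T - {i}) \<and> i = lm (T - {i}) then 1/2 else 0)" by simp
  have l: "xa (T - {i}) i = (if G (T - {i}) \<and> i = lm (T - {i}) then 1/2 else 0)"
    unfolding xa_def h1 h2 h3 by simp
  have "(if i \<in> RR T then 1/2 else 0) \<le> xa T i" using ee_nn[OF T] unfolding xa_def by auto
  moreover have "i \<in> RR T \<longleftrightarrow> G (T - {i}) \<and> i = lm (T - {i})" unfolding RR_def using i by auto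
  ultimately show ?thesis using l by auto
qed

lemma G_low: assumes T: "T \<subseteq> {..<n}" and g: "G T" shows "lm T < n" "lm T \<notin> T"
proof -
  have "\<exists>i<n. i \<notin> T" using g G_eq[of T] finite_subset[OF T] unfolding dec_def by auto
  then show "lm T < n" "lm T \<notin> T" using lm_spec by auto
qed

lemma xa_sum_gen:
  assumes T: "T \<subseteq> {..<n}"
  shows "(\<Sum>i<n. xa T i * w i) = (if G T then w (lm T) / 2 else 0) + (\<Sum>i\<in>RR T. w i) / 2
          + (if T \<noteq> {} then ee T * w (hm T) else 0)"
proof -
  have e: "xa T i * w i = (if i = lm T then (if G T \<and> lm T \<notin> T then w i / 2 else 0) else 0)
     + (if i \<in> RR T then w i / 2 else 0)
     + (if i = hm T then (if T \<noteq> {} then ee T * w i else 0) else 0)" for i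
    unfolding xa_def by (auto simp: algebra_simps)
  have s1: "(\<Sum>i<n. (if i = lm T then (if G T \<and> lm T \<notin> T then w i / 2 else 0) else 0))
      = (if G T then w (lm T) / 2 else 0)"
    using G_low[OF T] by (simp add: sum.delta)
  have RRs: "RR T \<subseteq> {..<n}" using RR_sub T by blast
  have s2: "(\<Sum>i<n. (if i \<in> RR T then w i / 2 else 0)) = (\<Sum>i\<in>RR T. w i) / 2"
  proof -
    have "(\<Sum>i<n. (if i \<in> RR T then w i / 2 else 0)) = (\<Sum>i\<in>{..<n} \<inter> RR T. w i / 2)"
      by (simp add: sum.inter_restrict)
    also have "{..<n} \<inter> RR T = RR T" using RRs by blast
    finally show ?thesis by (simp add: sum_divide_distrib)
  qed
  have s3: "(\<Sum>i<n. (if i = hm T then (if T \<noteq> {} then ee T * w i else 0) else 0))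
      = (if T \<noteq> {} then ee T * w (hm T) else 0)"
    using hm_notin[OF T] T by (auto simp: sum.delta)
  show ?thesis unfolding e sum.distrib s1 s2 s3 by simp
qed

lemma xa_sum_le: assumes T: "T \<subseteq> {..<n}" shows "(\<Sum>i<n. xa T i) \<le> 1"
proof -
  have "(\<Sum>i<n. xa T i) = (\<Sum>i<n. xa T i * 1)" by simp
  also have "\<dots> = (if G T then 1 / 2 else 0) + real (card (RR T)) / 2 + (if T \<noteq> {} then ee T else 0)"
    using xa_sum_gen[OF T, of "\<lambda>_. 1"] by simp
  also have "\<dots> \<le> 1" using ee_nn[OF T] unfolding ee_def by (auto split: if_splits)
  finally show ?thesis .
qed

lemma claimB:
  assumes T: "T \<subseteq> {..<n}" and R: "RR T = {a,b}" "a \<noteq> b" and k: "k < n"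
  shows "v k T \<le> v a T + v b T"
proof -
  have ab: "a \<in> RR T" "b \<in> RR T" using R by auto
  have inT: "a \<in> T" "b \<in> T" using ab RR_sub by auto
  have lt: "a < n" "b < n" using inT T by auto
  have nn: "0 \<le> v a T" "0 \<le> v b T" using vnn lt T by auto
  show ?thesis
  proof (cases "k = a \<or> k = b")
    case True then show ?thesis using nn by auto
  next
    case False
    have "v k (insert a (T - {a})) - v k (T - {a}) \<le> v k (insert a (T - {a,b})) - v k (T - {a,b})"
      by (rule vsub) (use k lt T in auto)
    moreover have "insert a (T - {a}) = T" "insert a (T - {a,b}) = T - {b}" using inT R(2) by auto
    moreover have "0 \<le> v k (T - {a,b})" using vnn[OF k, of "T - {a,b}"] T by blast
    ultimately have s: "v k T \<le> v k (T - {a}) + v k (T - {b})" by simp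
    have b1: "v k (T - {x}) \<le> v x (T - {x})" if x: "x \<in> RR T" for x
    proof (cases "k \<in> T - {x}")
      case True then show ?thesis using RR_info(4)[OF T x] by (simp add: less_imp_le)
    next
      case False then show ?thesis using RR_info(3)[OF T x] k by auto
    qed
    have "v a (T - {a}) \<le> v a T" "v b (T - {b}) \<le> v b T" using vmono lt T by auto
    then show ?thesis using s b1[OF ab(1)] b1[OF ab(2)] by linarith
  qed
qed

lemma welfare:
  assumes T: "T \<subseteq> {..<n}" and k: "k < n"
  shows "v k T \<le> 2 * (\<Sum>i<n. xa T i * v i T)"
proof -
  have HHe: "(if T \<noteq> {} then ee T * v (hm T) T else 0) = ee T * HH T" unfolding HH_def by simp
  have W: "(\<Sum>i<n. xa T i * v i T) = (if G T then v (lm T) T / 2 else 0) + (\<Sum>i\<in>RR T. v i T) / 2 + ee T * HH T"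
    using xa_sum_gen[OF T, of "\<lambda>i. v i T"] HHe by simp
  have RRs: "RR T \<subseteq> {..<n}" using RR_sub T by blast
  have Snn: "0 \<le> (\<Sum>i\<in>RR T. v i T)" using RRs T vnn by (intro sum_nonneg) auto
  have Hnn: "0 \<le> HH T" using HH_nn[OF T] .
  have een: "0 \<le> ee T" using ee_nn[OF T] .
  have finT: "finite T" using T finite_subset by blast
  have kH: "k \<in> T \<Longrightarrow> v k T \<le> HH T" using HH_ge[OF T] by blast
  have c2: "card (RR T) \<le> 2" using card_RR[OF T] .
  show ?thesis
  proof (cases "G T")
    case True
    have d: "dec T (RR T)" using True G_eq[OF finT] by simp
    then have c1: "card (RR T) \<le> 1" and ineq: "(2 - real (card (RR T))) * HH T + (\<Sum>i\<in>RR T. v i T) < v (lm T) T"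
      and low: "\<exists>i<n. i \<notin> T" unfolding dec_def by auto
    have "real (card (RR T)) \<le> 1" using c1 by simp
    then have "HH T * real (card (RR T)) \<le> HH T" using Hnn by (rule mult_left_le)
    moreover have "(2 - real (card (RR T))) * HH T = 2 * HH T - HH T * real (card (RR T))" by (simp add: algebra_simps)
    ultimately have "HH T \<le> (2 - real (card (RR T))) * HH T" using Hnn by linarith
    then have HL: "HH T < v (lm T) T" using ineq Snn by linarith
    have kL: "k \<notin> T \<Longrightarrow> v k T \<le> v (lm T) T" using lm_spec[OF low] k by auto
    have "v k T \<le> v (lm T) T" using kL kH HL by (cases "k \<in> T") auto
    moreover have "0 \<le> ee T * HH T" using een Hnn by simp
    ultimately show ?thesis unfolding W using True Snn by simp
  next
    case False
    have ee: "ee T = 1 - real (card (RR T)) / 2" unfolding ee_def using False by simp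
    show ?thesis
    proof (cases "card (RR T) = 2")
      case True
      then obtain a b where R: "RR T = {a,b}" "a \<noteq> b" by (auto simp: card_2_iff)
      have "v k T \<le> v a T + v b T" by (rule claimB[OF T R k])
      then show ?thesis unfolding W ee using False True R by simp
    next
      case c: False
      then have c1: "card (RR T) \<le> 1" using c2 by simp
      have "real (card (RR T)) \<le> 1" using c1 by simp
      then have "HH T * real (card (RR T)) \<le> HH T" using Hnn by (rule mult_left_le)
      moreover have "(2 - real (card (RR T))) * HH T = 2 * HH T - HH T * real (card (RR T))" by (simp add: algebra_simps)
      ultimately have HH2: "HH T \<le> (2 - real (card (RR T))) * HH T" using Hnn by linarith
      have nd: "\<not> dec T (RR T)" using False G_eq[OF finT] by simp
      have eq2: "2 * (\<Sum>i<n. xa T i * v i T) = (2 - real (card (RR T))) * HH T + (\<Sum>i\<in>RR T. v i T)"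
        unfolding W ee using False by (simp add: algebra_simps)
      show ?thesis
      proof (cases "k \<in> T")
        case True
        then show ?thesis unfolding eq2 using kH HH2 Snn by linarith
      next
        case kT: False
        then have low: "\<exists>i<n. i \<notin> T" using k by blast
        then have "v (lm T) T \<le> (2 - real (card (RR T))) * HH T + (\<Sum>i\<in>RR T. v i T)"
          using nd c1 unfolding dec_def by auto
        moreover have "v k T \<le> v (lm T) T" using lm_spec[OF low] k kT by auto
        ultimately show ?thesis unfolding eq2 by linarith
      qed
    qed
  qed
qed

end

theorem theorem1:
  fixes n :: nat and v :: "nat \<Rightarrow> nat set \<Rightarrow> real"
  assumes "n \<ge> 1" and "valid_SOS n v"
  shows "\<exists>x p. feasible n x \<and> expost_IC_IR n v x p \<and>
    (\<forall>S. S \<subseteq> {..<n} \<longrightarrow> (\<Sum>i<n. x S i * v i S) \<ge> (1/2) * (MAX i\<in>{..<n}. v i S))"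
proof -
  note sos = assms(2)
  define x where "x = xa n v"
  define p where "p = (\<lambda>T i. x T i * v i (T - {i}))"
  have feas: "feasible n x"
    unfolding feasible_def x_def using xa_nn[OF sos] xa_sum_le[OF sos] by blast
  have ic: "expost_IC_IR n v x p"
    unfolding expost_IC_IR_def
  proof (intro allI impI conjI)
    fix i S assume i: "i < n" and S: "S \<subseteq> {..<n}"
    define d where "d = v i S - v i (S - {i})"
    have dnn: "0 \<le> d" unfolding d_def using vmono[OF sos i, of "S - {i}" S] S by auto
    have xnn: "0 \<le> x T i" if "T \<subseteq> {..<n}" for T unfolding x_def using xa_nn[OF sos that] .
    have u: "x T i * v i S - p T i = x T i * d" if "T - {i} = S - {i}" for T
      unfolding p_def d_def using that by (simp add: algebra_simps)
    show "0 \<le> x S i * v i S - p S i" using u[of S] xnn[OF S] dnn by simp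
    fix b
    have sr: "set_report S i b - {i} = S - {i}" unfolding set_report_def by auto
    show "x (set_report S i b) i * v i S - p (set_report S i b) i \<le> x S i * v i S - p S i"
      unfolding u[OF sr] u[of S, simplified]
    proof (cases "i \<in> S")
      case True
      show "x (set_report S i b) i * d \<le> x S i * d"
      proof (cases b)
        case True
        then have "set_report S i b = S" unfolding set_report_def using \<open>i \<in> S\<close> by auto
        then show ?thesis by simp
      next
        case False
        then have "set_report S i b = S - {i}" unfolding set_report_def by auto
        moreover have "x (S - {i}) i \<le> x S i" unfolding x_def using xa_mono[OF sos S True] .
        ultimately show ?thesis using dnn by (simp add: mult_right_mono)
      qed
    next
      case False
      then have "d = 0" unfolding d_def by simp
      then show "x (set_report S i b) i * d \<le> x S i * d" by simp
    qed
  qed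
  have wf: "(\<Sum>i<n. x S i * v i S) \<ge> (1/2) * (MAX i\<in>{..<n}. v i S)" if S: "S \<subseteq> {..<n}" for S
  proof -
    have ne: "(\<lambda>i. v i S) ` {..<n} \<noteq> {}" using assms(1) by (auto simp: lessThan_empty_iff)
    have "(MAX i\<in>{..<n}. v i S) \<le> 2 * (\<Sum>i<n. x S i * v i S)"
      unfolding x_def using welfare[OF sos S] ne by (subst Max_le_iff) auto
    then show ?thesis by simp
  qed
  show ?thesis using feas ic wf by blast
qed

end
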